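(* Let $N\ge0$ and let $\hat A=\sum_{n,m=0}^N A_{n,m}|n\rangle\langle m|$ be a single-mode operator supported on Fock states with at most $N$ photons. Then $\hat A$ has approximate operator coherent rank at most $N+1$. One explicit representation is, for nonzero real $\epsilon$, $$\tilde{\hat A}=\sum_{k,l=0}^N c_{k,l}\,\big|\epsilon e^{2\pi i k/(N+1)}\big\rangle\big\langle \epsilon e^{2\pi i l/(N+1)}\big|,\qquad c_{k,l}=\frac{e^{|\epsilon|^2}}{(N+1)^2}\sum_{n,m=0}^N\sqrt{n!m!}\,\frac{A_{n,m}}{\epsilon^{n+m}}\,e^{-2\pi i(kn-lm)/(N+1)},$$ which approximates $\hat A$ arbitrarily accurately as $\epsilon\to0$.
   Context: Single-mode Fock basis $\{|n\rangle\}$; coherent states $|\alpha\rangle=e^{-|\alpha|^2/2}\sum_n\frac{\alpha^n}{\sqrt{n!}}|n\rangle$ (kets with complex arguments such as $\epsilon e^{2\pi ik/(N+1)}$ are coherent states). A state has coherent rank $k$ if it is a superposition of $k$ coherent states; its approximate coherent rank is the smallest $k$ such that for every $\delta>0$ there is a coherent rank $k$ state with fidelity $>1-\delta$ to it. An operator $\hat A$ has (approximate) operator coherent rank $\ell$ iff $\hat A|\vec\alpha\rangle$ has (approximate) coherent rank at most $\ell$ for every coherent state $|\vec\alpha\rangle$. *)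

theory Defs
  imports "HOL-Analysis.Analysis"
begin

text \<open>Single-mode states are represented by their Fock-basis amplitudes
  \<open>\<psi> :: nat \<Rightarrow> complex\<close> (\<open>\<psi> n = \<langle>n|\<psi>\<rangle>\<close>).\<close>

definition coh :: "complex \<Rightarrow> nat \<Rightarrow> complex" where
  "coh \<alpha> n = complex_of_real (exp (- (cmod \<alpha>)\<^sup>2 / 2)) * \<alpha> ^ n
               / complex_of_real (sqrt (fact n))"

definition inner_st :: "(nat \<Rightarrow> complex) \<Rightarrow> (nat \<Rightarrow> complex) \<Rightarrow> complex" where
  "inner_st \<phi> \<psi> = infsum (\<lambda>n. cnj (\<phi> n) * \<psi> n) UNIV"

definition sqnorm_st :: "(nat \<Rightarrow> complex) \<Rightarrow> real" where
  "sqnorm_st \<psi> = infsum (\<lambda>n. (cmod (\<psi> n))\<^sup>2) UNIV"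

definition norm_st :: "(nat \<Rightarrow> complex) \<Rightarrow> real" where
  "norm_st \<psi> = sqrt (sqnorm_st \<psi>)"

definition fidelity :: "(nat \<Rightarrow> complex) \<Rightarrow> (nat \<Rightarrow> complex) \<Rightarrow> real" where
  "fidelity \<psi> \<phi> = (cmod (inner_st \<psi> \<phi>))\<^sup>2 / (sqnorm_st \<psi> * sqnorm_st \<phi>)"

definition coh_rank_le :: "nat \<Rightarrow> (nat \<Rightarrow> complex) \<Rightarrow> bool" where
  "coh_rank_le k \<psi> \<longleftrightarrow>
     (\<exists>(c :: nat \<Rightarrow> complex) (a :: nat \<Rightarrow> complex). \<psi> = (\<lambda>n. \<Sum>j<k. c j * coh (a j) n))"

text \<open>Approximate coherent rank at most \<open>k\<close>. The zero vector is the empty superposition.\<close>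
definition approx_coh_rank_le :: "nat \<Rightarrow> (nat \<Rightarrow> complex) \<Rightarrow> bool" where
  "approx_coh_rank_le k \<psi> \<longleftrightarrow>
     \<psi> = (\<lambda>_. 0) \<or>
     (\<forall>\<delta>>0. \<exists>\<phi>. coh_rank_le k \<phi> \<and> fidelity \<psi> \<phi> > 1 - \<delta>)"

definition approx_op_coh_rank_le ::
    "nat \<Rightarrow> ((nat \<Rightarrow> complex) \<Rightarrow> (nat \<Rightarrow> complex)) \<Rightarrow> bool" where
  "approx_op_coh_rank_le k Aop \<longleftrightarrow> (\<forall>\<alpha>. approx_coh_rank_le k (Aop (coh \<alpha>)))"

definition fock_op :: "nat \<Rightarrow> (nat \<Rightarrow> nat \<Rightarrow> complex) \<Rightarrow> (nat \<Rightarrow> complex) \<Rightarrow> (nat \<Rightarrow> complex)" where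
  "fock_op N A \<psi> = (\<lambda>p. if p \<le> N then (\<Sum>m\<le>N. A p m * \<psi> m) else 0)"

definition root_pt :: "nat \<Rightarrow> nat \<Rightarrow> complex" where
  "root_pt N k = exp (2 * complex_of_real pi * \<i> * of_nat k / of_nat (N + 1))"

definition approx_coef :: "nat \<Rightarrow> (nat \<Rightarrow> nat \<Rightarrow> complex) \<Rightarrow> real \<Rightarrow> nat \<Rightarrow> nat \<Rightarrow> complex" where
  "approx_coef N A \<epsilon> k l =
     complex_of_real (exp (\<bar>\<epsilon>\<bar>\<^sup>2)) / (of_nat (N + 1))\<^sup>2 *
     (\<Sum>n\<le>N. \<Sum>m\<le>N. complex_of_real (sqrt (fact n * fact m)) * A n m
        / (complex_of_real \<epsilon>) ^ (n + m)
        * exp (- 2 * complex_of_real pi * \<i> * (of_nat (k * n) - of_nat (l * m)) / of_nat (N + 1)))"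

definition approx_op :: "nat \<Rightarrow> (nat \<Rightarrow> nat \<Rightarrow> complex) \<Rightarrow> real \<Rightarrow> (nat \<Rightarrow> complex) \<Rightarrow> (nat \<Rightarrow> complex)" where
  "approx_op N A \<epsilon> \<psi> = (\<lambda>p. \<Sum>k\<le>N. \<Sum>l\<le>N.
      approx_coef N A \<epsilon> k l * coh (complex_of_real \<epsilon> * root_pt N k) p
        * inner_st (coh (complex_of_real \<epsilon> * root_pt N l)) \<psi>)"

end

theory Submission
  imports Defs
begin

lemma root_pt_norm: "cmod (root_pt N k) = 1"
  unfolding root_pt_def by (simp add: norm_exp_eq_Re)

lemma root_pt_cnj: "cnj (root_pt N k) = inverse (root_pt N k)"
  unfolding root_pt_def by (simp add: exp_cnj exp_minus[symmetric])

lemma root_pt_pow: "root_pt N k ^ a = root_pt N a ^ k"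
proof -
  have "root_pt N k ^ a = exp (of_nat a * (2 * complex_of_real pi * \<i> * of_nat k / of_nat (N + 1)))"
    unfolding root_pt_def by (simp only: exp_of_nat_mult)
  also have "\<dots> = exp (of_nat k * (2 * complex_of_real pi * \<i> * of_nat a / of_nat (N + 1)))"
    by (simp add: field_simps)
  also have "\<dots> = root_pt N a ^ k"
    unfolding root_pt_def by (simp only: exp_of_nat_mult)
  finally show ?thesis .
qed

lemma root_pt_pow1: "root_pt N a ^ (N+1) = 1"
  unfolding root_pt_def using complex_root_unity[of "N+1" a] by simp

lemma root_pt_eq: "root_pt N a = root_pt N b \<longleftrightarrow> a mod (N+1) = b mod (N+1)"
  unfolding root_pt_def using complex_root_unity_eq[of "N+1" a b] by simp

lemma charsum:
  "(\<Sum>k\<le>N. root_pt N k ^ a * cnj (root_pt N k) ^ b) =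
     (if a mod (N+1) = b mod (N+1) then of_nat (N+1) else 0)"
proof -
  define q where "q = root_pt N a / root_pt N b"
  have nz: "root_pt N b \<noteq> 0" using root_pt_norm[of N b] by auto
  have "(\<Sum>k\<le>N. root_pt N k ^ a * cnj (root_pt N k) ^ b) = (\<Sum>k<N+1. q ^ k)"
    unfolding q_def
    by (intro sum.cong) (auto simp: root_pt_cnj root_pt_pow[of N _ a] root_pt_pow[of N _ b]
          power_divide field_simps power_inverse)
  also have "\<dots> = (if a mod (N+1) = b mod (N+1) then of_nat (N+1) else 0)"
  proof (cases "a mod (N+1) = b mod (N+1)")
    case True
    then have "q = 1" unfolding q_def using root_pt_eq[of N a b] nz by simp
    then show ?thesis using True by simp
  next
    case False
    then have "q \<noteq> 1" unfolding q_def using root_pt_eq[of N a b] nz by simp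
    moreover have "q ^ (N+1) = 1" unfolding q_def power_divide root_pt_pow1 by simp
    ultimately show ?thesis using False by (subst sum_gp_strict) simp
  qed
  finally show ?thesis .
qed

lemma coh_eps: "coh (of_real \<epsilon> * root_pt N k) p =
   of_real (exp (- \<epsilon>\<^sup>2 / 2)) * of_real \<epsilon> ^ p * root_pt N k ^ p / of_real (sqrt (fact p))"
proof -
  have "(cmod (of_real \<epsilon> * root_pt N k))\<^sup>2 = \<epsilon>\<^sup>2"
    by (simp only: norm_mult root_pt_norm norm_of_real) simp
  then show ?thesis unfolding coh_def by (simp only: power_mult_distrib mult.assoc)
qed

lemma exp_coef: "exp (- 2 * complex_of_real pi * \<i> * (of_nat (k * n) - of_nat (l * m)) / of_nat (N + 1))
   = cnj (root_pt N k) ^ n * root_pt N l ^ m"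
proof -
  have 1: "root_pt N k ^ n = exp (of_nat n * (2 * complex_of_real pi * \<i> * of_nat k / of_nat (N + 1)))"
    unfolding root_pt_def by (simp only: exp_of_nat_mult)
  have 2: "root_pt N l ^ m = exp (of_nat m * (2 * complex_of_real pi * \<i> * of_nat l / of_nat (N + 1)))"
    unfolding root_pt_def by (simp only: exp_of_nat_mult)
  have "cnj (root_pt N k) ^ n * root_pt N l ^ m = cnj (root_pt N k ^ n) * root_pt N l ^ m"
    by simp
  also have "\<dots> = exp (cnj (of_nat n * (2 * complex_of_real pi * \<i> * of_nat k / of_nat (N + 1)))
     + of_nat m * (2 * complex_of_real pi * \<i> * of_nat l / of_nat (N + 1)))"
    unfolding 1 2 exp_cnj exp_add by simp
  also have "\<dots> = exp (- 2 * complex_of_real pi * \<i> * (of_nat (k * n) - of_nat (l * m)) / of_nat (N + 1))"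
    by (rule arg_cong[where f=exp]) (simp add: add_divide_distrib[symmetric] algebra_simps)
  finally show ?thesis by simp
qed

lemma swap4:
  "(\<Sum>k\<in>K. \<Sum>l\<in>L. \<Sum>n\<in>Nn. \<Sum>m\<in>M. f k l n m) = (\<Sum>n\<in>Nn. \<Sum>m\<in>M. \<Sum>k\<in>K. \<Sum>l\<in>L. f k l n m)"
proof -
  have "(\<Sum>k\<in>K. \<Sum>l\<in>L. \<Sum>n\<in>Nn. \<Sum>m\<in>M. f k l n m) = (\<Sum>k\<in>K. \<Sum>n\<in>Nn. \<Sum>l\<in>L. \<Sum>m\<in>M. f k l n m)"
    by (rule sum.cong[OF refl], rule sum.swap)
  also have "\<dots> = (\<Sum>n\<in>Nn. \<Sum>k\<in>K. \<Sum>l\<in>L. \<Sum>m\<in>M. f k l n m)"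
    by (rule sum.swap)
  also have "\<dots> = (\<Sum>n\<in>Nn. \<Sum>k\<in>K. \<Sum>m\<in>M. \<Sum>l\<in>L. f k l n m)"
    by (rule sum.cong[OF refl], rule sum.cong[OF refl], rule sum.swap)
  also have "\<dots> = (\<Sum>n\<in>Nn. \<Sum>m\<in>M. \<Sum>k\<in>K. \<Sum>l\<in>L. f k l n m)"
    by (rule sum.cong[OF refl], rule sum.swap)
  finally show ?thesis .
qed

lemma prod_sums:
  fixes a b c :: complex
  shows "a * (b * sum f K) * (c * sum g L) = (\<Sum>k\<in>K. \<Sum>l\<in>L. a * b * c * (f k * g l))"
proof -
  have "a * (b * sum f K) * (c * sum g L) = (a * b * c) * (sum f K * sum g L)" by (simp add: mult_ac)
  also have "\<dots> = (a * b * c) * (\<Sum>k\<in>K. \<Sum>l\<in>L. f k * g l)" by (simp only: sum_product)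
  finally show ?thesis by (simp only: sum_distrib_left)
qed

lemma decomp:
  fixes \<epsilon> :: real and N :: nat
  defines "E \<equiv> complex_of_real (exp (\<epsilon>\<^sup>2 / 2)) / of_nat (N+1)"
  shows "approx_op N A \<epsilon> \<psi> p =
   (\<Sum>n\<le>N. \<Sum>m\<le>N. A n m *
      (E * of_real (sqrt (fact n)) / of_real \<epsilon> ^ n *
         (\<Sum>k\<le>N. cnj (root_pt N k) ^ n * coh (of_real \<epsilon> * root_pt N k) p)) *
      (E * of_real (sqrt (fact m)) / of_real \<epsilon> ^ m *
         (\<Sum>l\<le>N. root_pt N l ^ m * inner_st (coh (of_real \<epsilon> * root_pt N l)) \<psi>)))"
  (is "_ = ?R")
proof -
  let ?X = "\<lambda>k. coh (of_real \<epsilon> * root_pt N k) p"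
  let ?I = "\<lambda>l. inner_st (coh (of_real \<epsilon> * root_pt N l)) \<psi>"
  let ?T = "\<lambda>k l n m. E * E * (of_real (sqrt (fact n)) * of_real (sqrt (fact m)) * A n m
            / (of_real \<epsilon> ^ n * of_real \<epsilon> ^ m) * (cnj (root_pt N k) ^ n * root_pt N l ^ m)) * ?X k * ?I l"
  have EE: "complex_of_real (exp (\<bar>\<epsilon>\<bar>\<^sup>2)) / (of_nat (N + 1))\<^sup>2 = E * E"
    unfolding E_def by (simp add: power2_eq_square exp_add[symmetric] flip: of_real_mult)
  have "approx_op N A \<epsilon> \<psi> p = (\<Sum>k\<le>N. \<Sum>l\<le>N. \<Sum>n\<le>N. \<Sum>m\<le>N. ?T k l n m)"
    unfolding approx_op_def approx_coef_def exp_coef EE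
    by (simp add: sum_distrib_left sum_distrib_right real_sqrt_mult power_add)
  also have "\<dots> = (\<Sum>n\<le>N. \<Sum>m\<le>N. \<Sum>k\<le>N. \<Sum>l\<le>N. ?T k l n m)"
    by (rule swap4)
  also have "\<dots> = ?R"
    unfolding prod_sums
    by (intro sum.cong refl) (simp add: field_simps)
  finally show ?thesis .
qed

definition Uf :: "nat \<Rightarrow> real \<Rightarrow> nat \<Rightarrow> nat \<Rightarrow> complex" where
  "Uf N \<epsilon> n p = (if p mod (N+1) = n then
     of_real (sqrt (fact n) / sqrt (fact p)) * of_real \<epsilon> ^ p / of_real \<epsilon> ^ n else 0)"

definition hh :: "complex \<Rightarrow> real \<Rightarrow> nat \<Rightarrow> complex" where
  "hh \<beta> \<epsilon> j = of_real (exp (- (cmod \<beta>)\<^sup>2 / 2)) * (of_real \<epsilon> * \<beta>) ^ j / of_real (fact j)"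

definition Vf :: "nat \<Rightarrow> complex \<Rightarrow> real \<Rightarrow> nat \<Rightarrow> complex" where
  "Vf N \<beta> \<epsilon> m = of_real (sqrt (fact m)) / of_real \<epsilon> ^ m *
     infsum (\<lambda>j. if j mod (N+1) = m then hh \<beta> \<epsilon> j else 0) UNIV"

lemma exp_cancel: "complex_of_real (exp x) * complex_of_real (exp (- x)) = 1"
  by (simp add: exp_minus flip: of_real_mult)

lemma nz1: "1 + complex_of_nat N \<noteq> 0"
  by (metis of_nat_Suc of_nat_neq_0)

lemma U_eval:
  assumes "n \<le> N"
  shows "complex_of_real (exp (\<epsilon>\<^sup>2 / 2)) / of_nat (N+1) * of_real (sqrt (fact n)) / of_real \<epsilon> ^ n *
         (\<Sum>k\<le>N. cnj (root_pt N k) ^ n * coh (of_real \<epsilon> * root_pt N k) p) = Uf N \<epsilon> n p"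
proof -
  have "(\<Sum>k\<le>N. cnj (root_pt N k) ^ n * coh (of_real \<epsilon> * root_pt N k) p)
    = of_real (exp (- \<epsilon>\<^sup>2 / 2)) * of_real \<epsilon> ^ p / of_real (sqrt (fact p)) *
      (\<Sum>k\<le>N. root_pt N k ^ p * cnj (root_pt N k) ^ n)"
    by (simp add: coh_eps sum_distrib_left sum_divide_distrib mult_ac)
  also have "\<dots> = of_real (exp (- \<epsilon>\<^sup>2 / 2)) * of_real \<epsilon> ^ p / of_real (sqrt (fact p)) *
      (if p mod (N+1) = n then of_nat (N+1) else 0)"
    using assms by (simp add: charsum)
  finally have *: "(\<Sum>k\<le>N. cnj (root_pt N k) ^ n * coh (of_real \<epsilon> * root_pt N k) p) = \<dots>" .
  have ec: "complex_of_real (exp (\<epsilon>\<^sup>2 / 2)) * complex_of_real (exp (- \<epsilon>\<^sup>2 / 2)) = 1"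
    using exp_cancel[of "\<epsilon>\<^sup>2 / 2"] by simp
  show ?thesis
  proof (cases "p mod (N+1) = n")
    case True
    have "complex_of_real (exp (\<epsilon>\<^sup>2 / 2)) / of_nat (N+1) * of_real (sqrt (fact n)) / of_real \<epsilon> ^ n *
      (of_real (exp (- \<epsilon>\<^sup>2 / 2)) * of_real \<epsilon> ^ p / of_real (sqrt (fact p)) * of_nat (N+1))
      = (complex_of_real (exp (\<epsilon>\<^sup>2 / 2)) * of_real (exp (- \<epsilon>\<^sup>2 / 2))) * (of_nat (N+1) / of_nat (N+1))
        * (of_real (sqrt (fact n)) / of_real (sqrt (fact p)) * of_real \<epsilon> ^ p / of_real \<epsilon> ^ n)"
      by (simp only: times_divide_eq_left times_divide_eq_right divide_divide_eq_left mult_ac)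
    also have "\<dots> = of_real (sqrt (fact n) / sqrt (fact p)) * of_real \<epsilon> ^ p / of_real \<epsilon> ^ n"
      unfolding ec using nz1[of N] by simp
    finally show ?thesis unfolding * Uf_def using True nz1 by simp
  next
    case False
    then show ?thesis unfolding * Uf_def by simp
  qed
qed

lemma inner_coh_terms:
  "cnj (coh a j) * coh b j =
     of_real (exp (- (cmod a)\<^sup>2 / 2) * exp (- (cmod b)\<^sup>2 / 2)) * (cnj a * b) ^ j / of_real (fact j)"
proof -
  have "sqrt (fact j) * sqrt (fact j) = (fact j :: real)" by simp
  then have "complex_of_real (sqrt (fact j)) * complex_of_real (sqrt (fact j)) = of_real (fact j)"
    by (metis of_real_mult)
  then show ?thesis unfolding coh_def
    by (simp add: power_mult_distrib field_simps)
qed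

lemma exp_series_summable:
  "(\<lambda>j. c * (z::complex) ^ j / of_real (fact j)) summable_on UNIV"
proof (rule norm_summable_imp_summable_on)
  have "summable (\<lambda>j. cmod c * (inverse (fact j) * cmod z ^ j))"
    by (intro summable_mult summable_exp)
  then show "summable (\<lambda>j. norm (c * z ^ j / of_real (fact j)))"
    by (simp add: norm_mult norm_divide norm_power field_simps)
qed

lemma exp_real_has_sum:
  assumes "0 \<le> (x::real)"
  shows "((\<lambda>j. x ^ j / fact j) has_sum exp x) UNIV"
proof -
  have "(\<lambda>j. x ^ j / fact j) sums exp x"
    using exp_converges[of x] by (simp add: divide_inverse mult.commute)
  then show ?thesis by (rule sums_nonneg_imp_has_sum) (use assms in simp)
qed


lemma has_sum_finsum:
  fixes f :: "nat \<Rightarrow> nat \<Rightarrow> complex"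
  assumes "finite L" "\<And>l. l \<in> L \<Longrightarrow> (f l has_sum S l) A"
  shows "((\<lambda>j. \<Sum>l\<in>L. f l j) has_sum (\<Sum>l\<in>L. S l)) A"
  using assms
proof (induction L rule: finite_induct)
  case empty then show ?case by simp
next
  case (insert x F)
  then have a: "(f x has_sum S x) A" and b: "((\<lambda>j. \<Sum>l\<in>F. f l j) has_sum (\<Sum>l\<in>F. S l)) A" by auto
  have "((\<lambda>j. f x j + (\<Sum>l\<in>F. f l j)) has_sum (S x + (\<Sum>l\<in>F. S l))) A"
    by (rule has_sum_add[OF a b])
  then show ?case unfolding sum.insert[OF insert.hyps] .
qed

lemma infsum_finsum:
  fixes f :: "nat \<Rightarrow> nat \<Rightarrow> complex"
  assumes "finite L" "\<And>l. l \<in> L \<Longrightarrow> f l summable_on A"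
  shows "infsum (\<lambda>j. \<Sum>l\<in>L. f l j) A = (\<Sum>l\<in>L. infsum (f l) A)"
proof -
  have "\<And>l. l \<in> L \<Longrightarrow> (f l has_sum infsum (f l) A) A"
    using assms(2) by (rule has_sum_infsum)
  from has_sum_finsum[OF assms(1) this] show ?thesis by (rule infsumI)
qed

lemma V_eval:
  assumes "m \<le> N"
  shows "complex_of_real (exp (\<epsilon>\<^sup>2 / 2)) / of_nat (N+1) * of_real (sqrt (fact m)) / of_real \<epsilon> ^ m *
     (\<Sum>l\<le>N. root_pt N l ^ m * inner_st (coh (of_real \<epsilon> * root_pt N l)) (coh \<beta>)) = Vf N \<beta> \<epsilon> m"
proof -
  define g where "g = (\<lambda>j. if j mod (N+1) = m then hh \<beta> \<epsilon> j else 0)"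
  define C where "C = complex_of_real (exp (- \<epsilon>\<^sup>2 / 2)) * of_nat (N+1)"
  have cm: "(cmod (of_real \<epsilon> * root_pt N l))\<^sup>2 = \<epsilon>\<^sup>2" for l
    by (simp only: norm_mult root_pt_norm norm_of_real) simp
  have t: "cnj (coh (of_real \<epsilon> * root_pt N l) j) * coh \<beta> j =
      of_real (exp (- \<epsilon>\<^sup>2 / 2)) * (cnj (root_pt N l) ^ j * hh \<beta> \<epsilon> j)" for l j
    unfolding inner_coh_terms cm hh_def by (simp add: power_mult_distrib field_simps)
  have sl: "(\<Sum>l\<le>N. root_pt N l ^ m * (cnj (coh (of_real \<epsilon> * root_pt N l) j) * coh \<beta> j)) = C * g j" for j
  proof -
    have "(\<Sum>l\<le>N. root_pt N l ^ m * (cnj (coh (of_real \<epsilon> * root_pt N l) j) * coh \<beta> j))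
       = of_real (exp (- \<epsilon>\<^sup>2 / 2)) * hh \<beta> \<epsilon> j * (\<Sum>l\<le>N. root_pt N l ^ m * cnj (root_pt N l) ^ j)"
      unfolding t by (simp add: sum_distrib_left mult_ac)
    also have "\<dots> = C * g j"
      unfolding charsum C_def g_def using assms by auto
    finally show ?thesis .
  qed
  have summ: "(\<lambda>j. root_pt N l ^ m * (cnj (coh (of_real \<epsilon> * root_pt N l) j) * coh \<beta> j)) summable_on UNIV" for l
    unfolding inner_coh_terms by (rule summable_on_cmult_right[OF exp_series_summable])
  have "(\<Sum>l\<le>N. root_pt N l ^ m * inner_st (coh (of_real \<epsilon> * root_pt N l)) (coh \<beta>))
     = (\<Sum>l\<le>N. infsum (\<lambda>j. root_pt N l ^ m * (cnj (coh (of_real \<epsilon> * root_pt N l) j) * coh \<beta> j)) UNIV)"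
    unfolding inner_st_def infsum_cmult_right' ..
  also have "\<dots> = infsum (\<lambda>j. \<Sum>l\<le>N. root_pt N l ^ m * (cnj (coh (of_real \<epsilon> * root_pt N l) j) * coh \<beta> j)) UNIV"
    by (rule infsum_finsum[symmetric]) (use summ in auto)
  also have "\<dots> = C * infsum g UNIV"
    unfolding sl infsum_cmult_right' ..
  finally have *: "(\<Sum>l\<le>N. root_pt N l ^ m * inner_st (coh (of_real \<epsilon> * root_pt N l)) (coh \<beta>)) = C * infsum g UNIV" .
  have ec: "complex_of_real (exp (\<epsilon>\<^sup>2 / 2)) * complex_of_real (exp (- \<epsilon>\<^sup>2 / 2)) = 1"
    using exp_cancel[of "\<epsilon>\<^sup>2 / 2"] by simp
  have "complex_of_real (exp (\<epsilon>\<^sup>2 / 2)) / of_nat (N+1) * of_real (sqrt (fact m)) / of_real \<epsilon> ^ m * (C * infsum g UNIV)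
    = (complex_of_real (exp (\<epsilon>\<^sup>2 / 2)) * of_real (exp (- \<epsilon>\<^sup>2 / 2))) * (of_nat (N+1) / of_nat (N+1)) *
      (of_real (sqrt (fact m)) / of_real \<epsilon> ^ m * infsum g UNIV)"
    unfolding C_def by (simp only: times_divide_eq_left times_divide_eq_right divide_divide_eq_left mult_ac)
  also have "\<dots> = Vf N \<beta> \<epsilon> m"
    unfolding ec Vf_def g_def using nz1[of N] by simp
  finally show ?thesis unfolding * .
qed

lemma approx_closed:
  "approx_op N A \<epsilon> (coh \<beta>) p = (\<Sum>n\<le>N. \<Sum>m\<le>N. A n m * Uf N \<epsilon> n p * Vf N \<beta> \<epsilon> m)"
  unfolding decomp
proof (intro sum.cong refl)
  fix n m assume "n \<in> {..N}" "m \<in> {..N}"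
  then have "n \<le> N" "m \<le> N" by auto
  then show "A n m *
      (complex_of_real (exp (\<epsilon>\<^sup>2 / 2)) / of_nat (N+1) * of_real (sqrt (fact n)) / of_real \<epsilon> ^ n *
         (\<Sum>k\<le>N. cnj (root_pt N k) ^ n * coh (of_real \<epsilon> * root_pt N k) p)) *
      (complex_of_real (exp (\<epsilon>\<^sup>2 / 2)) / of_nat (N+1) * of_real (sqrt (fact m)) / of_real \<epsilon> ^ m *
         (\<Sum>l\<le>N. root_pt N l ^ m * inner_st (coh (of_real \<epsilon> * root_pt N l)) (coh \<beta>)))
     = A n m * Uf N \<epsilon> n p * Vf N \<beta> \<epsilon> m"
    by (simp only: U_eval V_eval)
qed

lemma coh_hh:
  assumes "\<epsilon> \<noteq> 0"
  shows "coh \<beta> m = of_real (sqrt (fact m)) / of_real \<epsilon> ^ m * hh \<beta> \<epsilon> m"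
proof -
  have "sqrt (fact m) * sqrt (fact m) = (fact m :: real)" by simp
  then have ss: "complex_of_real (sqrt (fact m)) * complex_of_real (sqrt (fact m)) = of_real (fact m)"
    by (metis of_real_mult)
  have nz: "complex_of_real (sqrt (fact m)) \<noteq> 0" by simp
  show ?thesis unfolding coh_def hh_def ss[symmetric] using assms nz
    by (simp add: power_mult_distrib field_simps)
qed

lemma hh_norm: "norm (hh \<beta> \<epsilon> j) = exp (- (cmod \<beta>)\<^sup>2 / 2) * (\<bar>\<epsilon>\<bar> ^ j * (cmod \<beta> ^ j / fact j))"
  unfolding hh_def by (simp add: norm_mult norm_divide norm_power field_simps)

lemma hh_summable: "hh \<beta> \<epsilon> summable_on UNIV"
proof -
  have "hh \<beta> \<epsilon> = (\<lambda>j. of_real (exp (- (cmod \<beta>)\<^sup>2 / 2)) * (of_real \<epsilon> * \<beta>) ^ j / of_real (fact j))"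
    unfolding hh_def by auto
  then show ?thesis using exp_series_summable by metis
qed

lemma V_bound:
  assumes "\<epsilon> \<noteq> 0" "\<bar>\<epsilon>\<bar> \<le> 1" "m \<le> N"
  shows "cmod (Vf N \<beta> \<epsilon> m - coh \<beta> m) \<le> \<bar>\<epsilon>\<bar> * (sqrt (fact m) * exp (cmod \<beta>))"
proof -
  define g where "g = (\<lambda>j. if j mod (N+1) = m then hh \<beta> \<epsilon> j else 0)"
  define d where "d = (\<lambda>j. if j = m then hh \<beta> \<epsilon> j else 0)"
  define g' where "g' = (\<lambda>j. if j mod (N+1) = m \<and> j \<noteq> m then hh \<beta> \<epsilon> j else 0)"
  have mm: "m mod (N+1) = m" using assms(3) by simp
  have gsplit: "g j = d j + g' j" for j unfolding g_def d_def g'_def using mm by auto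
  have hn: "(\<lambda>j. norm (hh \<beta> \<epsilon> j)) summable_on UNIV"
    using hh_summable summable_on_iff_abs_summable_on_complex by blast
  have ds: "d summable_on UNIV" unfolding summable_on_iff_abs_summable_on_complex
    by (rule Infinite_Sum.abs_summable_on_comparison_test'[OF hn]) (auto simp: d_def)
  define B where "B = (\<lambda>j. \<bar>\<epsilon>\<bar> ^ (m+1) * (cmod \<beta> ^ j / fact j))"
  have Bs: "(B has_sum \<bar>\<epsilon>\<bar> ^ (m+1) * exp (cmod \<beta>)) UNIV"
    unfolding B_def by (rule has_sum_cmult_right[OF exp_real_has_sum]) simp
  have gb: "norm (g' j) \<le> B j" for j
  proof (cases "j mod (N+1) = m \<and> j \<noteq> m")
    case True
    then have "m \<le> j" by (metis mod_less_eq_dividend)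
    with True have "m + 1 \<le> j" by simp
    then have p: "\<bar>\<epsilon>\<bar> ^ j \<le> \<bar>\<epsilon>\<bar> ^ (m+1)"
      by (rule power_decreasing) (use assms in auto)
    have e1: "exp (- (cmod \<beta>)\<^sup>2 / 2) \<le> 1" by simp
    have "norm (g' j) = exp (- (cmod \<beta>)\<^sup>2 / 2) * (\<bar>\<epsilon>\<bar> ^ j * (cmod \<beta> ^ j / fact j))"
      using True unfolding g'_def hh_norm[symmetric] by simp
    also have "\<dots> \<le> 1 * (\<bar>\<epsilon>\<bar> ^ (m+1) * (cmod \<beta> ^ j / fact j))"
      by (intro mult_mono p e1) auto
    finally show ?thesis unfolding B_def by simp
  next
    case False
    then have "g' j = 0" unfolding g'_def by (rule if_not_P)
    then show ?thesis unfolding B_def by simp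
  qed
  have g's: "g' summable_on UNIV" unfolding summable_on_iff_abs_summable_on_complex
    by (rule Infinite_Sum.abs_summable_on_comparison_test'[OF _ gb]) (use Bs in \<open>auto simp: summable_on_def\<close>)
  have g'n: "(\<lambda>j. norm (g' j)) summable_on UNIV"
    using g's summable_on_iff_abs_summable_on_complex by blast
  have "infsum d UNIV = infsum d {m}"
    by (rule infsum_cong_neutral) (auto simp: d_def)
  then have di: "infsum d UNIV = hh \<beta> \<epsilon> m" by (simp add: d_def)
  have gi: "infsum g UNIV = hh \<beta> \<epsilon> m + infsum g' UNIV"
    unfolding gsplit infsum_add[OF ds g's] di ..
  have "Vf N \<beta> \<epsilon> m - coh \<beta> m = of_real (sqrt (fact m)) / of_real \<epsilon> ^ m * infsum g' UNIV"
    unfolding Vf_def coh_hh[OF assms(1)] g_def[symmetric] gi by (simp add: algebra_simps add_divide_distrib)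
  then have "cmod (Vf N \<beta> \<epsilon> m - coh \<beta> m) = sqrt (fact m) / \<bar>\<epsilon>\<bar> ^ m * cmod (infsum g' UNIV)"
    by (simp add: norm_mult norm_divide norm_power)
  also have "\<dots> \<le> sqrt (fact m) / \<bar>\<epsilon>\<bar> ^ m * (\<bar>\<epsilon>\<bar> ^ (m+1) * exp (cmod \<beta>))"
  proof (rule mult_left_mono)
    have "cmod (infsum g' UNIV) \<le> infsum (\<lambda>j. norm (g' j)) UNIV"
      by (rule norm_infsum_bound) (use g's summable_on_iff_abs_summable_on_complex in blast)
    also have "\<dots> \<le> infsum B UNIV"
      by (rule infsum_mono[OF g'n _ gb]) (use Bs in \<open>auto simp: summable_on_def\<close>)
    also have "\<dots> = \<bar>\<epsilon>\<bar> ^ (m+1) * exp (cmod \<beta>)" using Bs by (rule infsumI)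
    finally show "cmod (infsum g' UNIV) \<le> \<bar>\<epsilon>\<bar> ^ (m+1) * exp (cmod \<beta>)" .
  qed simp
  also have "\<dots> = \<bar>\<epsilon>\<bar> * (sqrt (fact m) * exp (cmod \<beta>))"
    using assms(1) by (simp add: field_simps)
  finally show ?thesis .
qed

lemma sum_delta_at:
  fixes X :: "nat \<Rightarrow> complex"
  assumes "r \<le> N" "\<And>n. n \<le> N \<Longrightarrow> n \<noteq> r \<Longrightarrow> X n = 0"
  shows "(\<Sum>n\<le>N. X n) = X r"
proof -
  have "(\<Sum>n\<le>N. X n) = (\<Sum>n\<le>N. if n = r then X r else 0)"
    by (rule sum.cong) (use assms in auto)
  also have "\<dots> = X r" using assms(1) by simp
  finally show ?thesis .
qed

lemma half_pow: "(2::real) ^ (N+1) * (1/2) ^ p \<ge> 1" if "p \<le> N"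
proof -
  have "(2::real) ^ p \<le> 2 ^ (N+1)" by (rule power_increasing) (use that in auto)
  then show ?thesis by (simp add: power_one_over field_simps)
qed

lemma D_bound:
  fixes \<beta> :: complex and N :: nat and A :: "nat \<Rightarrow> nat \<Rightarrow> complex"
  defines "Cm \<equiv> \<lambda>m. sqrt (fact m) * exp (cmod \<beta>)"
  defines "K \<equiv> \<Sum>n\<le>N. \<Sum>m\<le>N. cmod (A n m) * Cm m"
  defines "K2 \<equiv> \<Sum>n\<le>N. \<Sum>m\<le>N. cmod (A n m) * (cmod (coh \<beta> m) + Cm m)"
  assumes e0: "\<epsilon> \<noteq> 0" and e1: "\<bar>\<epsilon>\<bar> \<le> 1/2"
  shows "cmod (approx_op N A \<epsilon> (coh \<beta>) p - fock_op N A (coh \<beta>) p)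
           \<le> \<bar>\<epsilon>\<bar> * ((K + K2) * 2 ^ (N+1)) * (1/2) ^ p"
proof -
  let ?V = "Vf N \<beta> \<epsilon>"
  have Cm0: "0 \<le> Cm m" for m unfolding Cm_def by simp
  have K0: "0 \<le> K" unfolding K_def by (intro sum_nonneg mult_nonneg_nonneg Cm0) auto
  have K20: "0 \<le> K2" unfolding K2_def by (intro sum_nonneg mult_nonneg_nonneg add_nonneg_nonneg Cm0) auto
  have Vb: "cmod (?V m - coh \<beta> m) \<le> \<bar>\<epsilon>\<bar> * Cm m" if "m \<le> N" for m
    unfolding Cm_def by (rule V_bound) (use e0 e1 that in auto)
  have rowK: "(\<Sum>m\<le>N. cmod (A n m) * Cm m) \<le> K" if "n \<le> N" for n
    unfolding K_def
    by (rule member_le_sum[where f="\<lambda>n. \<Sum>m\<le>N. cmod (A n m) * Cm m"])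
       (use that in \<open>auto intro!: sum_nonneg mult_nonneg_nonneg Cm0\<close>)
  have rowK2: "(\<Sum>m\<le>N. cmod (A n m) * (cmod (coh \<beta> m) + Cm m)) \<le> K2" if "n \<le> N" for n
    unfolding K2_def
    by (rule member_le_sum[where f="\<lambda>n. \<Sum>m\<le>N. cmod (A n m) * (cmod (coh \<beta> m) + Cm m)"])
       (use that in \<open>auto intro!: sum_nonneg mult_nonneg_nonneg add_nonneg_nonneg Cm0\<close>)
  have closed: "approx_op N A \<epsilon> (coh \<beta>) p = (\<Sum>n\<le>N. Uf N \<epsilon> n p * (\<Sum>m\<le>N. A n m * ?V m))"
    unfolding approx_closed by (simp add: sum_distrib_left mult_ac)
  show ?thesis
  proof (cases "p \<le> N")
    case True
    have pm: "p mod (N+1) = p" using True by simp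
    have "approx_op N A \<epsilon> (coh \<beta>) p = Uf N \<epsilon> p p * (\<Sum>m\<le>N. A p m * ?V m)"
      unfolding closed by (rule sum_delta_at) (use True pm in \<open>auto simp: Uf_def\<close>)
    also have "Uf N \<epsilon> p p = 1" unfolding Uf_def using pm e0 by simp
    finally have ap: "approx_op N A \<epsilon> (coh \<beta>) p = (\<Sum>m\<le>N. A p m * ?V m)" by simp
    have fo: "fock_op N A (coh \<beta>) p = (\<Sum>m\<le>N. A p m * coh \<beta> m)"
      unfolding fock_op_def using True by simp
    have "cmod (approx_op N A \<epsilon> (coh \<beta>) p - fock_op N A (coh \<beta>) p)
        = cmod (\<Sum>m\<le>N. A p m * (?V m - coh \<beta> m))"
      unfolding ap fo by (simp add: sum_subtractf right_diff_distrib)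
    also have "\<dots> \<le> (\<Sum>m\<le>N. cmod (A p m) * cmod (?V m - coh \<beta> m))"
      by (rule order_trans[OF norm_sum]) (simp add: norm_mult)
    also have "\<dots> \<le> (\<Sum>m\<le>N. cmod (A p m) * (\<bar>\<epsilon>\<bar> * Cm m))"
      by (intro sum_mono mult_left_mono Vb) auto
    also have "\<dots> = \<bar>\<epsilon>\<bar> * (\<Sum>m\<le>N. cmod (A p m) * Cm m)"
      by (simp add: sum_distrib_left mult_ac)
    also have "\<dots> \<le> \<bar>\<epsilon>\<bar> * K"
      by (intro mult_left_mono rowK True) simp
    also have "\<dots> \<le> \<bar>\<epsilon>\<bar> * ((K + K2) * (2 ^ (N+1) * (1/2) ^ p))"
    proof (intro mult_left_mono)
      have "K \<le> K + K2" using K20 by simp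
      also have "\<dots> \<le> (K + K2) * (2 ^ (N+1) * (1/2) ^ p)"
        using half_pow[OF True] K0 K20 by (simp add: mult_le_cancel_left1)
      finally show "K \<le> (K + K2) * (2 ^ (N+1) * (1/2) ^ p)" .
    qed simp
    finally show ?thesis by (simp add: mult_ac)
  next
    case False
    define r where "r = p mod (N+1)"
    have rN: "r \<le> N" unfolding r_def
      using mod_less_divisor[of "N+1" p] by simp
    have rp: "r \<le> p" unfolding r_def by simp
    have ap: "approx_op N A \<epsilon> (coh \<beta>) p = Uf N \<epsilon> r p * (\<Sum>m\<le>N. A r m * ?V m)"
      unfolding closed by (rule sum_delta_at[OF rN]) (auto simp: Uf_def r_def)
    have fo: "fock_op N A (coh \<beta>) p = 0"
      unfolding fock_op_def using False by simp
    have eN: "\<bar>\<epsilon>\<bar> ^ (p - N) = \<bar>\<epsilon>\<bar> * \<bar>\<epsilon>\<bar> ^ (p - N - 1)"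
      using False by (metis Suc_diff_Suc not_le power_Suc diff_Suc_eq_diff_pred diff_Suc_1)
    have Ub: "cmod (Uf N \<epsilon> r p) \<le> \<bar>\<epsilon>\<bar> * (2 ^ (N+1) * (1/2) ^ p)"
    proof -
      have sq: "sqrt (fact r) / sqrt (fact p) \<le> 1"
        using fact_mono[OF rp, where 'a=real] by simp
      have "cmod (Uf N \<epsilon> r p) = sqrt (fact r) / sqrt (fact p) * (\<bar>\<epsilon>\<bar> ^ p / \<bar>\<epsilon>\<bar> ^ r)"
        unfolding Uf_def r_def by (simp add: norm_mult norm_divide norm_power)
      also have "\<bar>\<epsilon>\<bar> ^ p / \<bar>\<epsilon>\<bar> ^ r = \<bar>\<epsilon>\<bar> ^ (p - r)"
        using power_diff[of "\<bar>\<epsilon>\<bar>" r p] e0 rp by simp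
      also have "sqrt (fact r) / sqrt (fact p) * \<bar>\<epsilon>\<bar> ^ (p - r) \<le> 1 * \<bar>\<epsilon>\<bar> ^ (p - r)"
        by (intro mult_right_mono sq) simp
      also have "\<dots> \<le> \<bar>\<epsilon>\<bar> ^ (p - N)"
        by simp (rule power_decreasing, use rN e1 in auto)
      also have "\<dots> \<le> \<bar>\<epsilon>\<bar> * (1/2) ^ (p - N - 1)"
        unfolding eN by (intro mult_left_mono power_mono e1) auto
      also have "(1/2::real) ^ (p - N - 1) = 2 ^ (N+1) * (1/2) ^ p"
      proof -
        have "p = (p - N - 1) + (N + 1)" using False by simp
        then have "(1/2::real) ^ p = (1/2) ^ (p - N - 1) * (1/2) ^ (N+1)"
          by (metis power_add)
        then show ?thesis by (simp add: power_one_over field_simps)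
      qed
      finally show ?thesis .
    qed
    have Sb: "cmod (\<Sum>m\<le>N. A r m * ?V m) \<le> K2"
    proof -
      have "cmod (\<Sum>m\<le>N. A r m * ?V m) \<le> (\<Sum>m\<le>N. cmod (A r m) * cmod (?V m))"
        by (rule order_trans[OF norm_sum]) (simp add: norm_mult)
      also have "\<dots> \<le> (\<Sum>m\<le>N. cmod (A r m) * (cmod (coh \<beta> m) + Cm m))"
      proof (intro sum_mono mult_left_mono)
        fix m assume "m \<in> {..N}"
        then have "cmod (?V m - coh \<beta> m) \<le> \<bar>\<epsilon>\<bar> * Cm m" using Vb by auto
        also have "\<dots> \<le> 1 * Cm m" by (intro mult_right_mono Cm0) (use e1 in auto)
        finally have "cmod (?V m - coh \<beta> m) \<le> Cm m" by simp
        moreover have "cmod (?V m) \<le> cmod (coh \<beta> m) + cmod (?V m - coh \<beta> m)"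
          by (metis add.commute diff_add_cancel norm_triangle_ineq)
        ultimately show "cmod (?V m) \<le> cmod (coh \<beta> m) + Cm m" by simp
      qed simp
      also have "\<dots> \<le> K2" by (rule rowK2[OF rN])
      finally show ?thesis .
    qed
    have "cmod (approx_op N A \<epsilon> (coh \<beta>) p - fock_op N A (coh \<beta>) p)
       = cmod (Uf N \<epsilon> r p) * cmod (\<Sum>m\<le>N. A r m * ?V m)"
      unfolding ap fo by (simp add: norm_mult)
    also have "\<dots> \<le> (\<bar>\<epsilon>\<bar> * (2 ^ (N+1) * (1/2) ^ p)) * K2"
      by (intro mult_mono Ub Sb) auto
    also have "\<dots> \<le> (\<bar>\<epsilon>\<bar> * (2 ^ (N+1) * (1/2) ^ p)) * (K + K2)"
      by (intro mult_left_mono) (use K0 in auto)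
    finally show ?thesis by (simp add: mult_ac)
  qed
qed

lemma D_bound_ex:
  "\<exists>M\<ge>0. \<forall>\<epsilon> p. \<epsilon> \<noteq> 0 \<longrightarrow> \<bar>\<epsilon>\<bar> \<le> 1/2 \<longrightarrow>
     cmod (approx_op N A \<epsilon> (coh \<beta>) p - fock_op N A (coh \<beta>) p) \<le> \<bar>\<epsilon>\<bar> * M * (1/2) ^ p"
proof -
  define Cm where "Cm = (\<lambda>m. sqrt (fact m) * exp (cmod \<beta>))"
  define K where "K = (\<Sum>n\<le>N. \<Sum>m\<le>N. cmod (A n m) * Cm m)"
  define K2 where "K2 = (\<Sum>n\<le>N. \<Sum>m\<le>N. cmod (A n m) * (cmod (coh \<beta> m) + Cm m))"
  have "\<forall>\<epsilon> p. \<epsilon> \<noteq> 0 \<longrightarrow> \<bar>\<epsilon>\<bar> \<le> 1/2 \<longrightarrow>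
     cmod (approx_op N A \<epsilon> (coh \<beta>) p - fock_op N A (coh \<beta>) p) \<le> \<bar>\<epsilon>\<bar> * ((K + K2) * 2 ^ (N+1)) * (1/2) ^ p"
    unfolding K_def K2_def Cm_def by (intro allI impI D_bound)
  then have "\<exists>M. \<forall>\<epsilon> p. \<epsilon> \<noteq> 0 \<longrightarrow> \<bar>\<epsilon>\<bar> \<le> 1/2 \<longrightarrow>
     cmod (approx_op N A \<epsilon> (coh \<beta>) p - fock_op N A (coh \<beta>) p) \<le> \<bar>\<epsilon>\<bar> * M * (1/2) ^ p"
    by blast
  then obtain M where M: "\<forall>\<epsilon> p. \<epsilon> \<noteq> 0 \<longrightarrow> \<bar>\<epsilon>\<bar> \<le> 1/2 \<longrightarrow>
     cmod (approx_op N A \<epsilon> (coh \<beta>) p - fock_op N A (coh \<beta>) p) \<le> \<bar>\<epsilon>\<bar> * M * (1/2) ^ p" by blast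
  show ?thesis
  proof (intro exI[of _ "\<bar>M\<bar>"] conjI allI impI)
    show "0 \<le> \<bar>M\<bar>" by simp
    fix \<epsilon> :: real and p :: nat assume "\<epsilon> \<noteq> 0" "\<bar>\<epsilon>\<bar> \<le> 1/2"
    then have "cmod (approx_op N A \<epsilon> (coh \<beta>) p - fock_op N A (coh \<beta>) p) \<le> \<bar>\<epsilon>\<bar> * M * (1/2) ^ p"
      using M by blast
    also have "\<dots> \<le> \<bar>\<epsilon>\<bar> * \<bar>M\<bar> * (1/2) ^ p"
      by (intro mult_right_mono mult_left_mono) auto
    finally show "cmod (approx_op N A \<epsilon> (coh \<beta>) p - fock_op N A (coh \<beta>) p) \<le> \<bar>\<epsilon>\<bar> * \<bar>M\<bar> * (1/2) ^ p" .
  qed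
qed

lemma geom4: "((\<lambda>p. (1/4::real) ^ p) has_sum 4/3) UNIV"
proof -
  have "(\<lambda>p. (1/4::real) ^ p) sums (1 / (1 - 1/4))" by (rule geometric_sums) simp
  then have "(\<lambda>p. (1/4::real) ^ p) sums (4/3)" by simp
  then show ?thesis by (rule sums_nonneg_imp_has_sum) simp
qed

lemma sq_bound:
  fixes f :: "nat \<Rightarrow> complex" and h :: "nat \<Rightarrow> real"
  assumes fb: "\<And>p. cmod (f p) \<le> c * (1/2) ^ p"
    and hb: "\<And>p. 0 \<le> h p" "\<And>p. h p \<le> (cmod (f p))\<^sup>2"
  shows "h summable_on UNIV" "infsum h UNIV \<le> c\<^sup>2 * (4/3)"
proof -
  have G: "((\<lambda>p. c\<^sup>2 * (1/4) ^ p) has_sum c\<^sup>2 * (4/3)) UNIV"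
    by (rule has_sum_cmult_right[OF geom4])
  have pb: "h p \<le> c\<^sup>2 * (1/4) ^ p" for p
  proof -
    have "(cmod (f p))\<^sup>2 \<le> (c * (1/2) ^ p)\<^sup>2"
      by (rule power_mono[OF fb]) simp
    also have "\<dots> = c\<^sup>2 * (1/4) ^ p"
    proof -
      have a: "((1/2::real) ^ p)\<^sup>2 = ((1/2)\<^sup>2) ^ p" by (metis power_mult mult.commute)
      have h4: "(1/2::real)\<^sup>2 = 1/4" by (simp add: power2_eq_square)
      show ?thesis by (simp only: power_mult_distrib a h4)
    qed
    finally show ?thesis using hb(2)[of p] by linarith
  qed
  show hs: "h summable_on UNIV"
    by (rule summable_on_comparison_test[OF _ pb hb(1)]) (use G in \<open>auto simp: summable_on_def\<close>)
  have "infsum h UNIV \<le> infsum (\<lambda>p. c\<^sup>2 * (1/4) ^ p) UNIV"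
    by (rule infsum_mono[OF hs _ pb]) (use G in \<open>auto simp: summable_on_def\<close>)
  also have "\<dots> = c\<^sup>2 * (4/3)" using G by (rule infsumI)
  finally show "infsum h UNIV \<le> c\<^sup>2 * (4/3)" .
qed

lemma ev_small: "eventually (\<lambda>\<epsilon>::real. \<epsilon> \<noteq> 0 \<and> \<bar>\<epsilon>\<bar> \<le> 1/2) (at 0)"
  unfolding eventually_at by (rule exI[of _ "1/2"]) auto

lemma part2:
  "((\<lambda>\<epsilon>::real. norm_st (\<lambda>p. approx_op N A \<epsilon> (coh \<beta>) p - fock_op N A (coh \<beta>) p)) \<longlongrightarrow> 0) (at 0)"
proof -
  obtain M where M0: "M \<ge> 0" and M: "\<And>\<epsilon> p. \<epsilon> \<noteq> 0 \<Longrightarrow> \<bar>\<epsilon>\<bar> \<le> 1/2 \<Longrightarrow>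
     cmod (approx_op N A \<epsilon> (coh \<beta>) p - fock_op N A (coh \<beta>) p) \<le> \<bar>\<epsilon>\<bar> * M * (1/2) ^ p"
    using D_bound_ex[of N A \<beta>] by blast
  show ?thesis
  proof (rule Lim_null_comparison)
    show "eventually (\<lambda>\<epsilon>. norm (norm_st (\<lambda>p. approx_op N A \<epsilon> (coh \<beta>) p - fock_op N A (coh \<beta>) p))
            \<le> 2 * M * \<bar>\<epsilon>\<bar>) (at 0)"
      using ev_small
    proof (rule eventually_mono)
      fix \<epsilon> :: real assume e: "\<epsilon> \<noteq> 0 \<and> \<bar>\<epsilon>\<bar> \<le> 1/2"
      let ?D = "\<lambda>p. approx_op N A \<epsilon> (coh \<beta>) p - fock_op N A (coh \<beta>) p"
      have "sqnorm_st ?D \<le> (\<bar>\<epsilon>\<bar> * M)\<^sup>2 * (4/3)"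
        unfolding sqnorm_st_def
        by (rule sq_bound(2)[where f="?D"]) (use M e in auto)
      also have "\<dots> \<le> (2 * M * \<bar>\<epsilon>\<bar>)\<^sup>2"
        by (simp add: power_mult_distrib)
      finally have "sqrt (sqnorm_st ?D) \<le> sqrt ((2 * M * \<bar>\<epsilon>\<bar>)\<^sup>2)"
        by (rule real_sqrt_le_mono)
      also have "\<dots> = 2 * M * \<bar>\<epsilon>\<bar>" using M0 by simp
      finally have "sqrt (sqnorm_st ?D) \<le> 2 * M * \<bar>\<epsilon>\<bar>" .
      moreover have "0 \<le> sqnorm_st ?D" unfolding sqnorm_st_def by (rule infsum_nonneg) simp
      ultimately show "norm (norm_st ?D) \<le> 2 * M * \<bar>\<epsilon>\<bar>"
        unfolding norm_st_def by simp
    qed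
    show "((\<lambda>\<epsilon>::real. 2 * M * \<bar>\<epsilon>\<bar>) \<longlongrightarrow> 0) (at 0)"
      by (rule tendsto_eq_intros refl | simp)+
  qed
qed

lemma coh_rank_approx: "coh_rank_le (N+1) (approx_op N A \<epsilon> \<psi>)"
  unfolding coh_rank_le_def
proof (intro exI)
  show "approx_op N A \<epsilon> \<psi> = (\<lambda>p. \<Sum>j<N+1.
     (\<lambda>j. \<Sum>l\<le>N. approx_coef N A \<epsilon> j l * inner_st (coh (of_real \<epsilon> * root_pt N l)) \<psi>) j *
     coh ((\<lambda>j. of_real \<epsilon> * root_pt N j) j) p)"
    unfolding approx_op_def
    by (intro ext, simp only: Suc_eq_plus1[symmetric] lessThan_Suc_atMost)
       (simp add: sum_distrib_left mult_ac)
qed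

lemma infsum_supp:
  fixes f :: "nat \<Rightarrow> 'a::{comm_monoid_add, t2_space}"
  assumes "\<And>p. N < p \<Longrightarrow> f p = 0"
  shows "infsum f UNIV = (\<Sum>p\<le>N. f p)" "f summable_on UNIV"
proof -
  have "infsum f UNIV = infsum f {..N}"
    by (rule infsum_cong_neutral) (use assms in auto)
  then show "infsum f UNIV = (\<Sum>p\<le>N. f p)" by simp
  have "f summable_on {..N}" by simp
  then show "f summable_on UNIV"
    by (rule summable_on_cong_neutral[THEN iffD1, rotated -1]) (use assms in auto)
qed

lemma part1: "approx_coh_rank_le (N + 1) (fock_op N A (coh \<alpha>))"
proof -
  define \<psi> where "\<psi> = fock_op N A (coh \<alpha>)"
  have \<psi>N: "\<And>p. N < p \<Longrightarrow> \<psi> p = 0" unfolding \<psi>_def fock_op_def by simp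
  show ?thesis unfolding approx_coh_rank_le_def \<psi>_def[symmetric]
  proof (cases "\<psi> = (\<lambda>_. 0)")
    case True then show "\<psi> = (\<lambda>_. 0) \<or> (\<forall>\<delta>>0. \<exists>\<phi>. coh_rank_le (N + 1) \<phi> \<and> 1 - \<delta> < fidelity \<psi> \<phi>)" by simp
  next
    case False
    then obtain q where q: "\<psi> q \<noteq> 0" by auto
    then have qN: "q \<le> N" using \<psi>N by (meson not_le)
    define S where "S = (\<Sum>p\<le>N. (cmod (\<psi> p))\<^sup>2)"
    have S0: "0 < S" unfolding S_def
      by (rule sum_pos2[of _ q]) (use q qN in auto)
    define \<phi> where "\<phi> = (\<lambda>\<epsilon> :: real. approx_op N A \<epsilon> (coh \<alpha>))"
    obtain M where M0: "M \<ge> 0" and M: "\<And>\<epsilon> p. \<epsilon> \<noteq> 0 \<Longrightarrow> \<bar>\<epsilon>\<bar> \<le> 1/2 \<Longrightarrow>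
       cmod (\<phi> \<epsilon> p - \<psi> p) \<le> \<bar>\<epsilon>\<bar> * M * (1/2) ^ p"
      using D_bound_ex[of N A \<alpha>] unfolding \<phi>_def \<psi>_def by blast
    define T where "T = (\<lambda>\<epsilon>. infsum (\<lambda>p. if p \<le> N then 0 else (cmod (\<phi> \<epsilon> p))\<^sup>2) UNIV)"
    define F where "F = (\<lambda>\<epsilon>. (cmod (\<Sum>p\<le>N. cnj (\<psi> p) * \<phi> \<epsilon> p))\<^sup>2 /
        (S * ((\<Sum>p\<le>N. (cmod (\<phi> \<epsilon> p))\<^sup>2) + T \<epsilon>)))"
    have inner: "inner_st \<psi> (\<phi> \<epsilon>) = (\<Sum>p\<le>N. cnj (\<psi> p) * \<phi> \<epsilon> p)" for \<epsilon>
      unfolding inner_st_def by (rule infsum_supp(1)) (simp add: \<psi>N)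
    have sq\<psi>: "sqnorm_st \<psi> = S"
      unfolding sqnorm_st_def S_def by (rule infsum_supp(1)) (simp add: \<psi>N)
    have Tb: "T \<epsilon> \<le> (\<bar>\<epsilon>\<bar> * M)\<^sup>2 * (4/3)" "(\<lambda>p. if p \<le> N then 0 else (cmod (\<phi> \<epsilon> p))\<^sup>2) summable_on UNIV"
      if e: "\<epsilon> \<noteq> 0 \<and> \<bar>\<epsilon>\<bar> \<le> 1/2" for \<epsilon>
    proof -
      have fb: "cmod (\<phi> \<epsilon> p - \<psi> p) \<le> (\<bar>\<epsilon>\<bar> * M) * (1/2) ^ p" for p using M e by auto
      have hb: "(if p \<le> N then 0 else (cmod (\<phi> \<epsilon> p))\<^sup>2) \<le> (cmod (\<phi> \<epsilon> p - \<psi> p))\<^sup>2" for p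
        using \<psi>N[of p] by auto
      show "T \<epsilon> \<le> (\<bar>\<epsilon>\<bar> * M)\<^sup>2 * (4/3)" unfolding T_def
        by (rule sq_bound(2)[OF fb _ hb]) simp
      show "(\<lambda>p. if p \<le> N then 0 else (cmod (\<phi> \<epsilon> p))\<^sup>2) summable_on UNIV"
        by (rule sq_bound(1)[OF fb _ hb]) simp
    qed
    have T0: "0 \<le> T \<epsilon>" for \<epsilon> unfolding T_def by (rule infsum_nonneg) simp
    have sq\<phi>: "sqnorm_st (\<phi> \<epsilon>) = (\<Sum>p\<le>N. (cmod (\<phi> \<epsilon> p))\<^sup>2) + T \<epsilon>"
      if e: "\<epsilon> \<noteq> 0 \<and> \<bar>\<epsilon>\<bar> \<le> 1/2" for \<epsilon>
    proof -
      let ?f1 = "\<lambda>p. if p \<le> N then (cmod (\<phi> \<epsilon> p))\<^sup>2 else 0"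
      let ?f2 = "\<lambda>p. if p \<le> N then 0 else (cmod (\<phi> \<epsilon> p))\<^sup>2"
      have s1: "?f1 summable_on UNIV" by (rule infsum_supp(2)[where N=N]) simp
      have i1: "infsum ?f1 UNIV = (\<Sum>p\<le>N. (cmod (\<phi> \<epsilon> p))\<^sup>2)"
        by (subst infsum_supp(1)[where N=N]) auto
      have "sqnorm_st (\<phi> \<epsilon>) = infsum (\<lambda>p. ?f1 p + ?f2 p) UNIV"
        unfolding sqnorm_st_def by (rule infsum_cong) simp
      also have "\<dots> = infsum ?f1 UNIV + infsum ?f2 UNIV"
        by (rule infsum_add[OF s1 Tb(2)[OF e]])
      finally show ?thesis unfolding i1 T_def .
    qed
    have ev: "eventually (\<lambda>\<epsilon>. fidelity \<psi> (\<phi> \<epsilon>) = F \<epsilon>) (at 0)"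
      using ev_small by eventually_elim (simp add: fidelity_def F_def inner sq\<psi> sq\<phi>)
    have L1: "((\<lambda>\<epsilon>. \<phi> \<epsilon> p) \<longlongrightarrow> \<psi> p) (at 0)" for p
    proof -
      have "((\<lambda>\<epsilon>. \<phi> \<epsilon> p - \<psi> p) \<longlongrightarrow> 0) (at 0)"
      proof (rule Lim_null_comparison)
        show "eventually (\<lambda>\<epsilon>. norm (\<phi> \<epsilon> p - \<psi> p) \<le> M * (1/2) ^ p * \<bar>\<epsilon>\<bar>) (at 0)"
          using ev_small by eventually_elim (use M in \<open>auto simp: mult_ac\<close>)
        show "((\<lambda>\<epsilon>::real. M * (1/2) ^ p * \<bar>\<epsilon>\<bar>) \<longlongrightarrow> 0) (at 0)"
          by (rule tendsto_eq_intros refl | simp)+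
      qed
      then show ?thesis by (simp add: LIM_zero_iff)
    qed
    have LT: "(T \<longlongrightarrow> 0) (at 0)"
    proof (rule Lim_null_comparison)
      show "eventually (\<lambda>\<epsilon>. norm (T \<epsilon>) \<le> M\<^sup>2 * (4/3) * \<bar>\<epsilon>\<bar>\<^sup>2) (at 0)"
        using ev_small by eventually_elim (use Tb T0 in \<open>auto simp: power_mult_distrib mult_ac\<close>)
      show "((\<lambda>\<epsilon>::real. M\<^sup>2 * (4/3) * \<bar>\<epsilon>\<bar>\<^sup>2) \<longlongrightarrow> 0) (at 0)"
        by (rule tendsto_eq_intros refl | simp)+
    qed
    have LF: "(F \<longlongrightarrow> (cmod (\<Sum>p\<le>N. cnj (\<psi> p) * \<psi> p))\<^sup>2 / (S * ((\<Sum>p\<le>N. (cmod (\<psi> p))\<^sup>2) + 0))) (at 0)"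
      unfolding F_def using S0 by (intro tendsto_intros L1 LT) (auto simp: S_def[symmetric])
    have eqS: "(\<Sum>p\<le>N. cnj (\<psi> p) * \<psi> p) = of_real S"
      unfolding S_def of_real_sum
      by (intro sum.cong refl) (simp only: complex_norm_square mult.commute)
    have v: "(cmod (\<Sum>p\<le>N. cnj (\<psi> p) * \<psi> p))\<^sup>2 / (S * ((\<Sum>p\<le>N. (cmod (\<psi> p))\<^sup>2) + 0)) = 1"
      unfolding eqS S_def[symmetric] using S0 by (simp add: power2_eq_square)
    have "(F \<longlongrightarrow> 1) (at 0)" using LF unfolding v .
    then have Lfid: "((\<lambda>\<epsilon>. fidelity \<psi> (\<phi> \<epsilon>)) \<longlongrightarrow> 1) (at 0)"
      using tendsto_cong[OF ev] by simp
    show "\<psi> = (\<lambda>_. 0) \<or> (\<forall>\<delta>>0. \<exists>\<phi>. coh_rank_le (N + 1) \<phi> \<and> 1 - \<delta> < fidelity \<psi> \<phi>)"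
    proof (intro disjI2 allI impI)
      fix \<delta> :: real assume "0 < \<delta>"
      then have "eventually (\<lambda>\<epsilon>. 1 - \<delta> < fidelity \<psi> (\<phi> \<epsilon>)) (at 0)"
        by (intro order_tendstoD(1)[OF Lfid]) simp
      moreover have "(at (0::real)) \<noteq> bot" using trivial_limit_at by auto
      ultimately obtain \<epsilon> where "1 - \<delta> < fidelity \<psi> (\<phi> \<epsilon>)"
        using eventually_happens' by blast
      moreover have "coh_rank_le (N + 1) (\<phi> \<epsilon>)" unfolding \<phi>_def by (rule coh_rank_approx)
      ultimately show "\<exists>\<phi>. coh_rank_le (N + 1) \<phi> \<and> 1 - \<delta> < fidelity \<psi> \<phi>" by blast
    qed
  qed
qed

theorem proposition2:
  fixes N :: nat and A :: "nat \<Rightarrow> nat \<Rightarrow> complex"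
  shows "approx_op_coh_rank_le (N + 1) (fock_op N A)
    \<and> (\<forall>\<beta>. ((\<lambda>\<epsilon>::real. norm_st (\<lambda>p. approx_op N A \<epsilon> (coh \<beta>) p - fock_op N A (coh \<beta>) p))
              \<longlongrightarrow> 0) (at 0))"
  unfolding approx_op_coh_rank_le_def using part1 part2 by blast

end
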